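(* Let $T=T_{\mathrm{rg}}(\tau;\alpha,\beta)$ be an exceptional Jacobi operator in the rational gauge, let $\imath\in\{1,2,3,4\}$ and let $\phi$ be a quasi-rational eigenfunction of $T$ of asymptotic type $\imath$ with eigenvalue $\lambda$ and index $k$. Then $\lambda=\lambda_\imath(k;\alpha,\beta)$, where $\lambda_1(k;\alpha,\beta)=k(k+\alpha+\beta+1)$, $\lambda_2(k;\alpha,\beta)=(k-\alpha-\beta)(k+1)$, $\lambda_3(k;\alpha,\beta)=(k-\alpha)(k+\beta+1)$, $\lambda_4(k;\alpha,\beta)=(k-\beta)(k+\alpha+1)$.
   Context: $D=d/dx$; $\eta(x;\alpha,\beta)=\frac{\alpha+1}{x-1}+\frac{\beta+1}{x+1}$. For a real polynomial $\tau$ with $\tau(\pm1)\neq0$, $T_{\mathrm{ng}}(\tau;\alpha,\beta)=(x^2-1)\big(D^2-2\frac{\tau'}{\tau}D+\frac{\tau''}{\tau}+\eta(D-\frac{\tau'}{\tau})\big)+2x\frac{\tau'}{\tau}$ and $T_{\mathrm{rg}}(\tau;\alpha,\beta)=(x^2-1)(D^2+\eta D)+2(x^2-1)u'+2xu$, $u=\tau'/\tau$; it is an exceptional Jacobi operator if $T_{\mathrm{ng}}(\tau;\alpha,\beta)$ has a nonzero polynomial eigenfunction of degree $n$ for all but finitely many $n\in\mathbb{N}_0$. A quasi-rational eigenfunction is an eigenfunction $\phi$ ($T\phi=\lambda\phi$, $\lambda$ constant) with $w=\phi'/\phi$ rational. Its asymptotic type is 1 if $w$ is regular at $x=\pm1$,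 2 if $w$ has poles at both, 3 if pole at $x=1$ only, 4 if pole at $x=-1$ only. Its degree is $\deg\phi=\lim_{x\to\infty}xw(x)$. Let $\mu_1=1$, $\mu_2=(1-x)^{-\alpha}(1+x)^{-\beta}$, $\mu_3=(1-x)^{-\alpha}$, $\mu_4=(1+x)^{-\beta}$, with degrees $0,-\alpha-\beta,-\alpha,-\beta$. The index of a type $\imath$ quasi-rational eigenfunction $\phi$ is $k=\deg\phi-\deg\mu_\imath$. *)

theory Defs
  imports "HOL-Analysis.Analysis" "HOL-Computational_Algebra.Polynomial"
begin

definition eta :: "real \<Rightarrow> real \<Rightarrow> real \<Rightarrow> real" where
  "eta \<alpha> \<beta> x = (\<alpha> + 1) / (x - 1) + (\<beta> + 1) / (x + 1)"

definition regular_pt :: "real poly \<Rightarrow> real \<Rightarrow> bool" where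
  "regular_pt \<tau> x \<longleftrightarrow> x \<noteq> 1 \<and> x \<noteq> -1 \<and> poly \<tau> x \<noteq> 0"

definition T_ng :: "real poly \<Rightarrow> real \<Rightarrow> real \<Rightarrow> (real \<Rightarrow> real) \<Rightarrow> real \<Rightarrow> real" where
  "T_ng \<tau> \<alpha> \<beta> f x =
     (let u = poly (pderiv \<tau>) x / poly \<tau> x;
          v = poly (pderiv (pderiv \<tau>)) x / poly \<tau> x;
          f1 = deriv f x; f2 = deriv (deriv f) x
      in (x\<^sup>2 - 1) * (f2 - 2 * u * f1 + v * f x + eta \<alpha> \<beta> x * (f1 - u * f x))
         + 2 * x * u * f x)"

definition T_rg :: "real poly \<Rightarrow> real \<Rightarrow> real \<Rightarrow> (real \<Rightarrow> real) \<Rightarrow> real \<Rightarrow> real" where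
  "T_rg \<tau> \<alpha> \<beta> f x =
     (let u = (\<lambda>y. poly (pderiv \<tau>) y / poly \<tau> y)
      in (x\<^sup>2 - 1) * (deriv (deriv f) x + eta \<alpha> \<beta> x * deriv f x)
         + (2 * (x\<^sup>2 - 1) * deriv u x + 2 * x * u x) * f x)"

definition exceptional_jacobi :: "real poly \<Rightarrow> real \<Rightarrow> real \<Rightarrow> bool" where
  "exceptional_jacobi \<tau> \<alpha> \<beta> \<longleftrightarrow>
     poly \<tau> 1 \<noteq> 0 \<and> poly \<tau> (-1) \<noteq> 0 \<and>
     finite {n::nat. \<not> (\<exists>(y::real poly) (lam::real). y \<noteq> 0 \<and> degree y = n \<and>
        (\<forall>x. regular_pt \<tau> x \<longrightarrow> T_ng \<tau> \<alpha> \<beta> (poly y) x = lam * poly y x))}"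

definition rational_fun :: "(real \<Rightarrow> real) \<Rightarrow> bool" where
  "rational_fun w \<longleftrightarrow> (\<exists>p q :: real poly. q \<noteq> 0 \<and> w = (\<lambda>x. poly p x / poly q x))"

definition qr_eigenfunction ::
  "real poly \<Rightarrow> real \<Rightarrow> real \<Rightarrow> (real \<Rightarrow> real) \<Rightarrow> real \<Rightarrow> (real \<Rightarrow> real) \<Rightarrow> real \<Rightarrow> real \<Rightarrow> bool" where
  "qr_eigenfunction \<tau> \<alpha> \<beta> \<phi> lam w a b \<longleftrightarrow>
     a < b \<and> rational_fun w \<and>
     (\<forall>x\<in>{a<..<b}. \<phi> differentiable (at x) \<and> deriv \<phi> differentiable (at x) \<and>
        \<phi> x \<noteq> 0 \<and> deriv \<phi> x = w x * \<phi> x) \<and>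
     (\<forall>x\<in>{a<..<b}. regular_pt \<tau> x \<longrightarrow> T_rg \<tau> \<alpha> \<beta> \<phi> x = lam * \<phi> x)"

definition has_pole :: "(real \<Rightarrow> real) \<Rightarrow> real \<Rightarrow> bool" where
  "has_pole w c \<longleftrightarrow> filterlim w at_infinity (at c)"

definition asym_type :: "(real \<Rightarrow> real) \<Rightarrow> nat" where
  "asym_type w =
     (if \<not> has_pole w 1 \<and> \<not> has_pole w (-1) then 1
      else if has_pole w 1 \<and> has_pole w (-1) then 2
      else if has_pole w 1 then 3 else 4)"

text \<open>degree of a quasi-rational function with log-derivative w\<close>
definition qr_degree :: "(real \<Rightarrow> real) \<Rightarrow> real" where
  "qr_degree w = Lim at_top (\<lambda>x. x * w x)"

definition mu_degree :: "nat \<Rightarrow> real \<Rightarrow> real \<Rightarrow> real" where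
  "mu_degree i \<alpha> \<beta> = (if i = 1 then 0 else if i = 2 then - \<alpha> - \<beta> else if i = 3 then - \<alpha> else - \<beta>)"

definition jac_lambda :: "nat \<Rightarrow> real \<Rightarrow> real \<Rightarrow> real \<Rightarrow> real" where
  "jac_lambda i k \<alpha> \<beta> =
     (if i = 1 then k * (k + \<alpha> + \<beta> + 1)
      else if i = 2 then (k - \<alpha> - \<beta>) * (k + 1)
      else if i = 3 then (k - \<alpha>) * (k + \<beta> + 1)
      else (k - \<beta>) * (k + \<alpha> + 1))"

end

theory Submission
  imports Defs
begin


lemma coeff_mult_le:
  fixes a b :: "'a::comm_semiring_1 poly"
  assumes "degree a \<le> i" "degree b \<le> j"
  shows "coeff (a * b) (i + j) = coeff a i * coeff b j"
proof -
  have "coeff (a * b) (i + j) = (\<Sum>k\<le>i+j. coeff a k * coeff b (i + j - k))" by (rule coeff_mult)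
  also have "\<dots> = (\<Sum>k\<in>{i}. coeff a k * coeff b (i + j - k))"
  proof (rule sum.mono_neutral_right)
    show "\<forall>k\<in>{..i + j} - {i}. coeff a k * coeff b (i + j - k) = 0"
    proof
      fix k assume k: "k \<in> {..i + j} - {i}"
      show "coeff a k * coeff b (i + j - k) = 0"
      proof (cases "k < i")
        case True then have "coeff b (i + j - k) = 0" using assms(2) by (intro coeff_eq_0) auto
        then show ?thesis by simp
      next
        case False then have "coeff a k = 0" using k assms(1) by (intro coeff_eq_0) auto
        then show ?thesis by simp
      qed
    qed
  qed auto
  finally show ?thesis by simp
qed

lemma poly_ratio_tendsto:
  fixes P Q :: "real poly"
  assumes "Q \<noteq> 0" "degree P \<le> degree Q"
  shows "((\<lambda>x. poly P x / poly Q x) \<longlongrightarrow> coeff P (degree Q) / lead_coeff Q) at_top"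
proof -
  define m where "m = degree Q"
  have lim: "((\<lambda>x. poly R x / x ^ m) \<longlongrightarrow> coeff R m) at_top" if "degree R \<le> m" for R :: "real poly"
  proof -
    have eq: "poly R x = (\<Sum>i\<le>m. coeff R i * x ^ i)" for x
    proof -
      have "poly R x = poly (\<Sum>i\<le>m. monom (coeff R i) i) x" using poly_as_sum_of_monoms'[OF that] by simp
      also have "\<dots> = (\<Sum>i\<le>m. coeff R i * x ^ i)" by (simp add: poly_sum poly_monom)
      finally show ?thesis .
    qed
    have "((\<lambda>x. \<Sum>i\<le>m. coeff R i * x ^ i / x ^ m) \<longlongrightarrow> (\<Sum>i\<le>m. if i = m then coeff R i else 0)) at_top"
    proof (rule tendsto_sum)
      fix i assume i: "i \<in> {..m}"
      show "((\<lambda>x. coeff R i * x ^ i / x ^ m) \<longlongrightarrow> (if i = m then coeff R i else 0)) at_top"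
      proof (cases "i = m")
        case True
        have "eventually (\<lambda>x. coeff R i * x ^ i / x ^ m = coeff R i) at_top"
          using eventually_gt_at_top[of "0::real"] by eventually_elim (use True in auto)
        then show ?thesis using True by (simp add: tendsto_eventually)
      next
        case False
        then have im: "i < m" using i by auto
        have ev: "eventually (\<lambda>x. coeff R i * x ^ i / x ^ m = coeff R i * inverse (x ^ (m - i))) at_top"
          using eventually_gt_at_top[of "0::real"]
        proof eventually_elim
          case (elim x)
          have "x ^ m = x ^ i * x ^ (m - i)" using im by (simp add: power_add[symmetric])
          then show ?case using elim by (simp add: field_simps)
        qed
        have "((\<lambda>x::real. inverse (x ^ (m - i))) \<longlongrightarrow> 0) at_top"
          using im by (intro tendsto_inverse_0_at_top filterlim_pow_at_top filterlim_ident) auto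
        then have "((\<lambda>x::real. coeff R i * inverse (x ^ (m - i))) \<longlongrightarrow> coeff R i * 0) at_top"
          by (intro tendsto_mult tendsto_const)
        then show ?thesis using False tendsto_cong[OF ev] by simp
      qed
    qed
    then show ?thesis by (simp add: eq sum_divide_distrib)
  qed
  have "((\<lambda>x. (poly P x / x ^ m) / (poly Q x / x ^ m)) \<longlongrightarrow> coeff P m / coeff Q m) at_top"
    using assms by (intro tendsto_divide lim) (auto simp: m_def)
  moreover have "eventually (\<lambda>x. (poly P x / x ^ m) / (poly Q x / x ^ m) = poly P x / poly Q x) at_top"
    using eventually_gt_at_top[of "0::real"] by eventually_elim simp
  ultimately have "((\<lambda>x. poly P x / poly Q x) \<longlongrightarrow> coeff P m / coeff Q m) at_top"
    by (rule Lim_transform_eventually)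
  then show ?thesis by (simp add: m_def)
qed


definition Bop :: "real poly \<Rightarrow> real poly" where
  "Bop \<tau> = smult 2 ([:-1,0,1:] * (pderiv (pderiv \<tau>) * \<tau> - pderiv \<tau> * pderiv \<tau>)) + [:0,2:] * (pderiv \<tau> * \<tau>)"

lemma degree_pderiv_le': "degree (pderiv p) \<le> degree p - 1" for p :: "real poly"
  by (simp add: degree_pderiv)

lemma Bop_props:
  fixes \<tau> :: "real poly"
  shows "degree (Bop \<tau>) \<le> 2 * degree \<tau> \<and> coeff (Bop \<tau>) (2 * degree \<tau>) = 0"
proof (cases "degree \<tau> = 0")
  case True
  then have "pderiv \<tau> = 0" by (simp add: pderiv_eq_0_iff)
  then show ?thesis by (simp add: Bop_def)
next
  case False
  define t where "t = degree \<tau>"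
  define c where "c = lead_coeff \<tau>"
  have t1: "t \<ge> 1" using False t_def by auto
  have d1: "degree (pderiv \<tau>) \<le> t - 1" using degree_pderiv_le'[of \<tau>] t_def by simp
  have d2: "degree (pderiv (pderiv \<tau>)) \<le> t - 2"
    using degree_pderiv_le'[of "pderiv \<tau>"] d1 by simp
  have dt: "degree \<tau> \<le> t" using t_def by simp
  have c1: "coeff (pderiv \<tau>) (t - 1) = of_nat t * c"
    using t1 by (simp add: coeff_pderiv c_def t_def)
  have c2: "coeff (pderiv (pderiv \<tau>)) (t - 2) = of_nat (t - 1) * (of_nat t * c)" if "t \<ge> 2"
    using that c1 by (simp add: coeff_pderiv Suc_diff_Suc numeral_2_eq_2)
  define G where "G = pderiv (pderiv \<tau>) * \<tau> - pderiv \<tau> * pderiv \<tau>"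
  have dG: "degree G \<le> 2 * t - 2"
  proof -
    have "degree (pderiv (pderiv \<tau>) * \<tau>) \<le> (t - 2) + t"
      using degree_mult_le[of "pderiv (pderiv \<tau>)" \<tau>] d2 dt by linarith
    moreover have "degree (pderiv \<tau> * pderiv \<tau>) \<le> (t - 1) + (t - 1)"
      using degree_mult_le[of "pderiv \<tau>" "pderiv \<tau>"] d1 by linarith
    moreover have "pderiv (pderiv \<tau>) = 0" if "t = 1"
      using d1 that by (simp add: pderiv_eq_0_iff)
    ultimately show ?thesis unfolding G_def using t1
      by (intro order.trans[OF degree_diff_le_max]) (cases "t = 1"; auto)
  qed
  have cG: "coeff G (2 * t - 2) = of_nat (t - 1) * of_nat t * c * c - of_nat t * c * (of_nat t * c)"
  proof -
    have a: "coeff (pderiv (pderiv \<tau>) * \<tau>) (2 * t - 2) = of_nat (t - 1) * of_nat t * c * c"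
    proof (cases "t = 1")
      case True
      then have "degree (pderiv \<tau>) = 0" using d1 by simp
      then have "pderiv (pderiv \<tau>) = 0" by (simp add: pderiv_eq_0_iff)
      then show ?thesis using True by simp
    next
      case False
      then have "t \<ge> 2" using t1 by simp
      then have "coeff (pderiv (pderiv \<tau>) * \<tau>) ((t - 2) + t) = coeff (pderiv (pderiv \<tau>)) (t - 2) * coeff \<tau> t"
        using d2 dt by (intro coeff_mult_le)
      moreover have "(t - 2) + t = 2 * t - 2" using \<open>t \<ge> 2\<close> by simp
      ultimately show ?thesis using c2[OF \<open>t \<ge> 2\<close>] by (simp add: c_def t_def)
    qed
    have b: "coeff (pderiv \<tau> * pderiv \<tau>) ((t - 1) + (t - 1)) = of_nat t * c * (of_nat t * c)"
      using coeff_mult_le[OF d1 d1] c1 by simp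
    have "(t - 1) + (t - 1) = 2 * t - 2" using t1 by simp
    then show ?thesis unfolding G_def using a b by simp
  qed
  have dB1: "degree ([:-1,0,1:] * G) \<le> 2 * t" 
    using degree_mult_le[of "[:-1,0,1:]" G] dG t1 by simp
  have cB1: "coeff ([:-1,0,1:] * G) (2 * t) = coeff G (2 * t - 2)"
  proof -
    have f1: "coeff ([:-1,0,1:] * G) (2 + (2 * t - 2)) = coeff [:-1,0,1::real:] 2 * coeff G (2 * t - 2)"
      by (rule coeff_mult_le[OF _ dG]) simp
    have f2: "2 + (2 * t - 2) = 2 * t" using t1 by simp
    have f3: "coeff [:-1,0,1::real:] 2 = 1" by (simp add: numeral_2_eq_2)
    show ?thesis using f1 unfolding f2 f3 by simp
  qed
  have dH: "degree (pderiv \<tau> * \<tau>) \<le> (t - 1) + t" using degree_mult_le[of "pderiv \<tau>" \<tau>] d1 dt by linarith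
  have dB2: "degree ([:0,2:] * (pderiv \<tau> * \<tau>)) \<le> 2 * t" 
    using degree_mult_le[of "[:0,2:]" "pderiv \<tau> * \<tau>"] dH t1 by simp
  have cB2: "coeff ([:0,2:] * (pderiv \<tau> * \<tau>)) (2 * t) = 2 * (of_nat t * c * c)"
  proof -
    have f1: "coeff ([:0,2:] * (pderiv \<tau> * \<tau>)) (1 + ((t - 1) + t)) = coeff [:0,2::real:] 1 * coeff (pderiv \<tau> * \<tau>) ((t - 1) + t)"
      by (rule coeff_mult_le[OF _ dH]) simp
    have f4: "coeff (pderiv \<tau> * \<tau>) ((t - 1) + t) = of_nat t * c * c"
      using coeff_mult_le[OF d1 dt] c1 by (simp add: c_def t_def)
    have f2: "1 + ((t - 1) + t) = 2 * t" using t1 by simp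
    have f3: "coeff [:0,2::real:] 1 = 2" by simp
    show ?thesis using f1 unfolding f2 f3 f4 by simp
  qed
  have "degree (Bop \<tau>) \<le> 2 * t"
    unfolding Bop_def G_def[symmetric]
    using dB1 dB2 by (intro order.trans[OF degree_add_le_max]) (auto simp: degree_smult_le intro: order.trans[OF degree_smult_le])
  moreover have "coeff (Bop \<tau>) (2 * t) = 0"
    unfolding Bop_def G_def[symmetric] using cB1 cB2 cG t1
    by (simp add: algebra_simps of_nat_diff)
  ultimately show ?thesis by (simp add: t_def)
qed


definition Aop :: "real \<Rightarrow> real \<Rightarrow> real poly \<Rightarrow> real poly \<Rightarrow> real poly" where
  "Aop \<alpha> \<beta> p q = [:-1,0,1:] * ((pderiv p * q - p * pderiv q) + p * p) + [:\<alpha> - \<beta>, \<alpha> + \<beta> + 2:] * (p * q)"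

lemma coeff_X2: "coeff [:-1,0,1::real:] 2 = 1" by (simp add: numeral_2_eq_2)

lemma A_small:
  fixes p q :: "real poly"
  assumes lt: "degree p < degree q"
  defines "m \<equiv> degree q"
  shows "degree (Aop \<alpha> \<beta> p q) \<le> 2 * m \<and>
    coeff (Aop \<alpha> \<beta> p q) (2 * m) = coeff p (m - 1) ^ 2 + (\<alpha> + \<beta> + 1) * coeff p (m - 1) * lead_coeff q"
proof -
  define cp where "cp = coeff p (m - 1)"
  define lq where "lq = lead_coeff q"
  have m1: "m \<ge> 1" using lt m_def by simp
  have dp: "degree p \<le> m - 1" using lt m_def by simp
  have dq: "degree q \<le> m" using m_def by simp
  have dp': "degree (pderiv p) \<le> m - 2" using degree_pderiv_le'[of p] dp by simp
  have dq': "degree (pderiv q) \<le> m - 1" using degree_pderiv_le'[of q] m_def by simp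
  have p'0: "pderiv p = 0" if "m = 1" using dp that by (simp add: pderiv_eq_0_iff)
  have cq': "coeff (pderiv q) (m - 1) = of_nat m * lq"
    using m1 by (simp add: coeff_pderiv lq_def m_def)
  have dpq': "degree (p * pderiv q) \<le> 2 * m - 2"
    using degree_mult_le[of p "pderiv q"] dp dq' by linarith
  have cpq': "coeff (p * pderiv q) (2 * m - 2) = cp * (of_nat m * lq)"
  proof -
    have "coeff (p * pderiv q) ((m - 1) + (m - 1)) = cp * (of_nat m * lq)"
      using coeff_mult_le[OF dp dq'] cq' cp_def by simp
    moreover have "(m - 1) + (m - 1) = 2 * m - 2" using m1 by simp
    ultimately show ?thesis by simp
  qed
  have dp'q: "degree (pderiv p * q) \<le> 2 * m - 2"
  proof (cases "m = 1")
    case True then show ?thesis using p'0 by simp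
  next
    case False
    then show ?thesis using degree_mult_le[of "pderiv p" q] dp' dq m1 by linarith
  qed
  have cp'q: "coeff (pderiv p * q) (2 * m - 2) = of_nat (m - 1) * cp * lq"
  proof (cases "m = 1")
    case True then show ?thesis using p'0 by simp
  next
    case False
    then have m2: "m \<ge> 2" using m1 by simp
    have "coeff (pderiv p * q) ((m - 2) + m) = coeff (pderiv p) (m - 2) * lq"
      using coeff_mult_le[OF dp' dq] lq_def m_def by simp
    moreover have "(m - 2) + m = 2 * m - 2" using m2 by simp
    moreover have "coeff (pderiv p) (m - 2) = of_nat (m - 1) * cp"
      using m2 by (simp add: coeff_pderiv cp_def Suc_diff_Suc numeral_2_eq_2)
    ultimately show ?thesis by simp
  qed
  have dpp: "degree (p * p) \<le> 2 * m - 2" using degree_mult_le[of p p] dp by linarith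
  have cpp: "coeff (p * p) (2 * m - 2) = cp ^ 2"
  proof -
    have "coeff (p * p) ((m - 1) + (m - 1)) = cp * cp" using coeff_mult_le[OF dp dp] cp_def by simp
    moreover have "(m - 1) + (m - 1) = 2 * m - 2" using m1 by simp
    ultimately show ?thesis by (simp add: power2_eq_square)
  qed
  define H where "H = (pderiv p * q - p * pderiv q) + p * p"
  have dF: "degree (pderiv p * q - p * pderiv q) \<le> 2 * m - 2"
    by (rule order.trans[OF degree_diff_le_max]) (use dpq' dp'q in auto)
  have dH: "degree H \<le> 2 * m - 2" unfolding H_def
    by (rule order.trans[OF degree_add_le_max]) (use dF dpp in auto)
  have cH: "coeff H (2 * m - 2) = of_nat (m - 1) * cp * lq - cp * (of_nat m * lq) + cp ^ 2"
    unfolding H_def using cpq' cp'q cpp by simp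
  have dXH: "degree ([:-1,0,1:] * H) \<le> 2 * m" using degree_mult_le[of "[:-1,0,1:]" H] dH m1 by simp
  have cXH: "coeff ([:-1,0,1:] * H) (2 * m) = coeff H (2 * m - 2)"
  proof -
    have f1: "coeff ([:-1,0,1:] * H) (2 + (2 * m - 2)) = coeff [:-1,0,1::real:] 2 * coeff H (2 * m - 2)"
      by (rule coeff_mult_le[OF _ dH]) simp
    have f2: "2 + (2 * m - 2) = 2 * m" using m1 by simp
    show ?thesis using f1 unfolding f2 coeff_X2 by simp
  qed
  have dpq: "degree (p * q) \<le> (m - 1) + m" using degree_mult_le[of p q] dp dq by linarith
  have cpq: "coeff (p * q) ((m - 1) + m) = cp * lq" using coeff_mult_le[OF dp dq] cp_def lq_def m_def by simp
  have d1: "degree [:\<alpha> - \<beta>, \<alpha> + \<beta> + 2:] \<le> 1" by (rule order.trans[OF degree_pCons_le]) simp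
  have dL: "degree ([:\<alpha> - \<beta>, \<alpha> + \<beta> + 2:] * (p * q)) \<le> 2 * m"
    using degree_mult_le[of "[:\<alpha> - \<beta>, \<alpha> + \<beta> + 2:]" "p * q"] dpq m1 d1 by linarith
  have cL: "coeff ([:\<alpha> - \<beta>, \<alpha> + \<beta> + 2:] * (p * q)) (2 * m) = (\<alpha> + \<beta> + 2) * (cp * lq)"
  proof -
    have f1: "coeff ([:\<alpha> - \<beta>, \<alpha> + \<beta> + 2:] * (p * q)) (1 + ((m - 1) + m)) = coeff [:\<alpha> - \<beta>, \<alpha> + \<beta> + 2:] 1 * coeff (p * q) ((m - 1) + m)"
      by (rule coeff_mult_le[OF _ dpq]) simp
    have f2: "1 + ((m - 1) + m) = 2 * m" using m1 by simp
    show ?thesis using f1 unfolding f2 cpq by simp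
  qed
  have "degree (Aop \<alpha> \<beta> p q) \<le> 2 * m"
    unfolding Aop_def H_def[symmetric] by (rule degree_add_le[OF dXH dL])
  moreover have "coeff (Aop \<alpha> \<beta> p q) (2 * m) = cp ^ 2 + (\<alpha> + \<beta> + 1) * cp * lq"
    unfolding Aop_def H_def[symmetric] using cXH cL cH m1 by (simp add: algebra_simps of_nat_diff)
  ultimately show ?thesis by (simp add: cp_def lq_def)
qed

lemma A_big:
  fixes p q :: "real poly"
  assumes le: "degree q \<le> degree p"
  defines "n \<equiv> degree p"
  shows "degree (Aop \<alpha> \<beta> p q) \<le> 2 * n + 2 \<and> coeff (Aop \<alpha> \<beta> p q) (2 * n + 2) = lead_coeff p ^ 2"
proof -
  define F where "F = pderiv p * q - p * pderiv q"
  have dp: "degree p \<le> n" using n_def by simp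
  have dq: "degree q \<le> n" using le n_def by simp
  have dF: "degree ([:-1,0,1:] * F) \<le> 2 * n + 1"
  proof (cases "n = 0")
    case True
    then have "pderiv p = 0" "pderiv q = 0" using dp dq by (auto simp: pderiv_eq_0_iff)
    then show ?thesis by (simp add: F_def)
  next
    case False
    have "degree (pderiv p * q) \<le> 2 * n - 1"
      using degree_mult_le[of "pderiv p" q] degree_pderiv_le'[of p] dq n_def False by linarith
    moreover have "degree (p * pderiv q) \<le> 2 * n - 1"
      using degree_mult_le[of p "pderiv q"] degree_pderiv_le'[of q] dq n_def False by linarith
    ultimately have "degree F \<le> 2 * n - 1" unfolding F_def
      by (intro order.trans[OF degree_diff_le_max]) auto
    then show ?thesis using degree_mult_le[of "[:-1,0,1:]" F] False by simp
  qed
  have cF: "coeff ([:-1,0,1:] * F) (2 * n + 2) = 0" using dF by (intro coeff_eq_0) simp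
  have d1: "degree [:\<alpha> - \<beta>, \<alpha> + \<beta> + 2:] \<le> 1" by (rule order.trans[OF degree_pCons_le]) simp
  have dL: "degree ([:\<alpha> - \<beta>, \<alpha> + \<beta> + 2:] * (p * q)) \<le> 2 * n + 1"
    using degree_mult_le[of "[:\<alpha> - \<beta>, \<alpha> + \<beta> + 2:]" "p * q"] degree_mult_le[of p q] dp dq d1 by linarith
  have cL: "coeff ([:\<alpha> - \<beta>, \<alpha> + \<beta> + 2:] * (p * q)) (2 * n + 2) = 0" using dL by (intro coeff_eq_0) simp
  have dpp: "degree (p * p) \<le> n + n" using degree_mult_le[of p p] dp by simp
  have dX: "degree ([:-1,0,1:] * (p * p)) \<le> 2 * n + 2" using degree_mult_le[of "[:-1,0,1:]" "p * p"] dpp by simp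
  have cX: "coeff ([:-1,0,1:] * (p * p)) (2 * n + 2) = lead_coeff p ^ 2"
  proof -
    have f1: "coeff ([:-1,0,1:] * (p * p)) (2 + (n + n)) = coeff [:-1,0,1::real:] 2 * coeff (p * p) (n + n)"
      by (rule coeff_mult_le[OF _ dpp]) simp
    have f2: "2 + (n + n) = 2 * n + 2" by simp
    have f3: "coeff (p * p) (n + n) = lead_coeff p ^ 2" using coeff_mult_le[OF dp dp] n_def by (simp add: power2_eq_square)
    show ?thesis using f1 unfolding f2 f3 coeff_X2 by simp
  qed
  have eqA: "Aop \<alpha> \<beta> p q = [:-1,0,1:] * F + [:-1,0,1:] * (p * p) + [:\<alpha> - \<beta>, \<alpha> + \<beta> + 2:] * (p * q)"
    unfolding Aop_def F_def by (simp add: distrib_left)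
  have "degree (Aop \<alpha> \<beta> p q) \<le> 2 * n + 2" unfolding eqA
    by (intro degree_add_le dX) (use dF dL in linarith)+
  moreover have "coeff (Aop \<alpha> \<beta> p q) (2 * n + 2) = lead_coeff p ^ 2" unfolding eqA using cF cL cX by simp
  ultimately show ?thesis by simp
qed


lemma ident_small:
  fixes p q \<tau> :: "real poly"
  assumes I: "Aop \<alpha> \<beta> p q * (\<tau> * \<tau>) + Bop \<tau> * (q * q) = smult lam (q * q * (\<tau> * \<tau>))"
    and nz: "\<tau> \<noteq> 0" "q \<noteq> 0" and lt: "degree p < degree q"
  shows "lam = (coeff p (degree q - 1) / lead_coeff q) * (coeff p (degree q - 1) / lead_coeff q + \<alpha> + \<beta> + 1)"
proof -
  define m where "m = degree q"
  define t where "t = degree \<tau>"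
  define c where "c = lead_coeff \<tau>"
  define lq where "lq = lead_coeff q"
  define cp where "cp = coeff p (m - 1)"
  have c0: "c \<noteq> 0" using nz c_def by simp
  have lq0: "lq \<noteq> 0" using nz lq_def by simp
  have Ab: "degree (Aop \<alpha> \<beta> p q) \<le> 2 * m" and Ac: "coeff (Aop \<alpha> \<beta> p q) (2 * m) = cp ^ 2 + (\<alpha> + \<beta> + 1) * cp * lq"
    using A_small[OF lt, of \<alpha> \<beta>] by (simp_all add: m_def cp_def lq_def)
  have Bb: "degree (Bop \<tau>) \<le> 2 * t" and Bc: "coeff (Bop \<tau>) (2 * t) = 0" using Bop_props[of \<tau>] t_def by auto
  have dtt: "degree (\<tau> * \<tau>) \<le> t + t" using degree_mult_le[of \<tau> \<tau>] t_def by simp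
  have ctt: "coeff (\<tau> * \<tau>) (t + t) = c * c" using coeff_mult_le[of \<tau> t \<tau> t] t_def c_def by simp
  have dqq: "degree (q * q) \<le> m + m" using degree_mult_le[of q q] m_def by simp
  have cqq: "coeff (q * q) (m + m) = lq * lq" using coeff_mult_le[of q m q m] m_def lq_def by simp
  define K where "K = 2 * m + 2 * t"
  have k1: "2 * m + (t + t) = K" "2 * t + (m + m) = K" "(m + m) + (t + t) = K" by (simp_all add: K_def)
  have e1: "coeff (Aop \<alpha> \<beta> p q * (\<tau> * \<tau>)) K = (cp ^ 2 + (\<alpha> + \<beta> + 1) * cp * lq) * (c * c)"
    using coeff_mult_le[OF Ab dtt] Ac ctt unfolding k1 by simp
  have e2: "coeff (Bop \<tau> * (q * q)) K = 0"
    using coeff_mult_le[OF Bb dqq] Bc unfolding k1 by simp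
  have e3: "coeff (q * q * (\<tau> * \<tau>)) K = lq * lq * (c * c)"
    using coeff_mult_le[OF dqq dtt] cqq ctt unfolding k1 by simp
  have "coeff (Aop \<alpha> \<beta> p q * (\<tau> * \<tau>) + Bop \<tau> * (q * q)) K
      = coeff (smult lam (q * q * (\<tau> * \<tau>))) K" using I by simp
  then have "(cp ^ 2 + (\<alpha> + \<beta> + 1) * cp * lq) * (c * c) = lam * (lq * lq * (c * c))"
    by (simp only: coeff_add coeff_smult e1 e2 e3)
  then have "cp ^ 2 + (\<alpha> + \<beta> + 1) * cp * lq = lam * (lq * lq)" using c0 by simp
  then have "lam = (cp / lq) * (cp / lq + \<alpha> + \<beta> + 1)" using lq0
    by (simp add: field_simps power2_eq_square)
  then show ?thesis by (simp add: cp_def lq_def m_def)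
qed

lemma ident_big:
  fixes p q \<tau> :: "real poly"
  assumes I: "Aop \<alpha> \<beta> p q * (\<tau> * \<tau>) + Bop \<tau> * (q * q) = smult lam (q * q * (\<tau> * \<tau>))"
    and nz: "\<tau> \<noteq> 0" "q \<noteq> 0" "p \<noteq> 0"
  shows "degree p < degree q"
proof (rule ccontr)
  assume "\<not> degree p < degree q"
  then have le: "degree q \<le> degree p" by simp
  define n where "n = degree p"
  define t where "t = degree \<tau>"
  define c where "c = lead_coeff \<tau>"
  have c0: "c \<noteq> 0" using nz c_def by simp
  have lp0: "lead_coeff p \<noteq> 0" using nz by simp
  have Ab: "degree (Aop \<alpha> \<beta> p q) \<le> 2 * n + 2" and Ac: "coeff (Aop \<alpha> \<beta> p q) (2 * n + 2) = lead_coeff p ^ 2"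
    using A_big[OF le, of \<alpha> \<beta>] by (simp_all add: n_def)
  have Bb: "degree (Bop \<tau>) \<le> 2 * t" using Bop_props[of \<tau>] t_def by auto
  have dtt: "degree (\<tau> * \<tau>) \<le> t + t" using degree_mult_le[of \<tau> \<tau>] t_def by simp
  have ctt: "coeff (\<tau> * \<tau>) (t + t) = c * c" using coeff_mult_le[of \<tau> t \<tau> t] t_def c_def by simp
  have dqq: "degree (q * q) \<le> n + n" using degree_mult_le[of q q] le n_def by simp
  have e1: "coeff (Aop \<alpha> \<beta> p q * (\<tau> * \<tau>)) ((2 * n + 2) + (t + t)) = lead_coeff p ^ 2 * (c * c)"
    using coeff_mult_le[OF Ab dtt] Ac ctt by simp
  have e2: "coeff (Bop \<tau> * (q * q)) ((2 * n + 2) + (t + t)) = 0"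
    using degree_mult_le[of "Bop \<tau>" "q * q"] Bb dqq by (intro coeff_eq_0) linarith
  have e3: "coeff (q * q * (\<tau> * \<tau>)) ((2 * n + 2) + (t + t)) = 0"
    using degree_mult_le[of "q * q" "\<tau> * \<tau>"] dtt dqq by (intro coeff_eq_0) linarith
  have "coeff (Aop \<alpha> \<beta> p q * (\<tau> * \<tau>) + Bop \<tau> * (q * q)) ((2 * n + 2) + (t + t))
      = coeff (smult lam (q * q * (\<tau> * \<tau>))) ((2 * n + 2) + (t + t))" using I by simp
  then have "lead_coeff p ^ 2 * (c * c) = 0" using e1 e2 e3 by simp
  then show False using c0 lp0 by simp
qed



lemma alg:
  fixes P Q Pd Qd T Td Tdd x \<alpha> \<beta> lam :: real
  assumes "Q \<noteq> 0" "T \<noteq> 0" "x - 1 \<noteq> 0" "x + 1 \<noteq> 0"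
   and e: "(x\<^sup>2 - 1) * (((Pd * Q - P * Qd) / Q^2 + (P/Q) * (P/Q)) + ((\<alpha> + 1) / (x - 1) + (\<beta> + 1) / (x + 1)) * (P/Q))
      + (2 * (x\<^sup>2 - 1) * ((Tdd * T - Td * Td) / T^2) + 2 * x * (Td / T)) = lam"
  shows "(x\<^sup>2 - 1) * ((Pd * Q - P * Qd) + P * P) * (T*T) + ((\<alpha> - \<beta>) + (\<alpha> + \<beta> + 2) * x) * (P * Q) * (T * T)
     + 2 * ((x\<^sup>2 - 1) * (Tdd * T - Td * Td)) * (Q * Q) + 2 * x * (Td * T) * (Q * Q) = lam * (Q * Q * (T * T))"
proof -
  have h: "(x\<^sup>2 - 1) * ((\<alpha> + 1) / (x - 1) + (\<beta> + 1) / (x + 1)) = (\<alpha> - \<beta>) + (\<alpha> + \<beta> + 2) * x"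
  proof -
    have "(x\<^sup>2 - 1) * ((\<alpha> + 1) / (x - 1) + (\<beta> + 1) / (x + 1))
        = (x + 1) * ((x - 1) * ((\<alpha> + 1) / (x - 1))) + (x - 1) * ((x + 1) * ((\<beta> + 1) / (x + 1)))"
      by (simp add: power2_eq_square algebra_simps)
    also have "\<dots> = (x + 1) * (\<alpha> + 1) + (x - 1) * (\<beta> + 1)" using assms(3,4) by simp
    finally show ?thesis by (simp add: algebra_simps)
  qed
  have "lam * (Q * Q * (T * T)) = ((x\<^sup>2 - 1) * (((Pd * Q - P * Qd) / Q^2 + (P/Q) * (P/Q))) 
      + ((x\<^sup>2 - 1) * ((\<alpha> + 1) / (x - 1) + (\<beta> + 1) / (x + 1))) * (P/Q)
      + (2 * (x\<^sup>2 - 1) * ((Tdd * T - Td * Td) / T^2) + 2 * x * (Td / T))) * (Q * Q * (T * T))"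
    unfolding e[symmetric] by (simp only: distrib_left distrib_right mult.assoc)
  also have "\<dots> = ((x\<^sup>2 - 1) * (((Pd * Q - P * Qd) / Q^2 + (P/Q) * (P/Q))) 
      + ((\<alpha> - \<beta>) + (\<alpha> + \<beta> + 2) * x) * (P/Q)
      + (2 * (x\<^sup>2 - 1) * ((Tdd * T - Td * Td) / T^2) + 2 * x * (Td / T))) * (Q * Q * (T * T))"
    by (simp only: h)
  also have "\<dots> = (x\<^sup>2 - 1) * ((Pd * Q - P * Qd) + P * P) * (T*T) + ((\<alpha> - \<beta>) + (\<alpha> + \<beta> + 2) * x) * (P * Q) * (T * T)
     + 2 * ((x\<^sup>2 - 1) * (Tdd * T - Td * Td)) * (Q * Q) + 2 * x * (Td * T) * (Q * Q)"
    using assms(1,2) by (simp add: field_simps power2_eq_square)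
  finally show ?thesis by simp
qed

lemma pointwise:
  fixes \<tau> p q :: "real poly" and \<alpha> \<beta> lam a b x :: real and \<phi> w :: "real \<Rightarrow> real"
  assumes ef: "qr_eigenfunction \<tau> \<alpha> \<beta> \<phi> lam w a b"
    and wdef: "w = (\<lambda>x. poly p x / poly q x)"
    and x: "regular_pt \<tau> x" "poly q x \<noteq> 0" "a < x" "x < b"
  shows "poly ([:-1,0,1:] * ((pderiv p * q - p * pderiv q) + p * p) * (\<tau> * \<tau>)
            + [:\<alpha> - \<beta>, \<alpha> + \<beta> + 2:] * (p * q) * (\<tau> * \<tau>)
            + smult 2 ([:-1,0,1:] * (pderiv (pderiv \<tau>) * \<tau> - pderiv \<tau> * pderiv \<tau>)) * (q * q)
            + [:0,2:] * (pderiv \<tau> * \<tau>) * (q * q)) x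
         = poly (smult lam (q * q * (\<tau> * \<tau>))) x"
proof -
  have xin: "x \<in> {a<..<b}" using x by auto
  from ef have d1: "\<And>y. y \<in> {a<..<b} \<Longrightarrow> deriv \<phi> y = w y * \<phi> y"
    and dif: "\<phi> differentiable (at x)" and phx: "\<phi> x \<noteq> 0"
    and eq: "T_rg \<tau> \<alpha> \<beta> \<phi> x = lam * \<phi> x"
    using xin x(1) unfolding qr_eigenfunction_def by auto
  have x1: "x \<noteq> 1" "x \<noteq> -1" and tx: "poly \<tau> x \<noteq> 0" using x(1) unfolding regular_pt_def by auto
  have pD: "DERIV \<phi> x :> deriv \<phi> x" using dif DERIV_deriv_iff_real_differentiable by blast
  have wD: "(w has_real_derivative poly (pderiv p * q - p * pderiv q) x / (poly q x)^2) (at x)"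
    unfolding wdef
    by (rule derivative_eq_intros poly_DERIV | use x(2) in \<open>auto simp: power2_eq_square\<close>)+
  have prodD: "((\<lambda>y. w y * \<phi> y) has_real_derivative
      (poly (pderiv p * q - p * pderiv q) x / (poly q x)^2 * \<phi> x + w x * deriv \<phi> x)) (at x)"
    using DERIV_mult[OF wD pD] by (simp add: mult.commute)
  have ddD: "DERIV (deriv \<phi>) x :> (poly (pderiv p * q - p * pderiv q) x / (poly q x)^2 * \<phi> x + w x * deriv \<phi> x)"
    by (rule has_field_derivative_transform_within_open[OF prodD _ xin]) (auto simp: d1)
  have uD: "((\<lambda>y. poly (pderiv \<tau>) y / poly \<tau> y) has_real_derivative
      poly (pderiv (pderiv \<tau>) * \<tau> - pderiv \<tau> * pderiv \<tau>) x / (poly \<tau> x)^2) (at x)"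
    by (rule derivative_eq_intros poly_DERIV | use tx in \<open>auto simp: power2_eq_square\<close>)+
  have e2: "(x\<^sup>2 - 1) * ((poly (pderiv p * q - p * pderiv q) x / (poly q x)^2 * \<phi> x + w x * (w x * \<phi> x))
        + ((\<alpha> + 1) / (x - 1) + (\<beta> + 1) / (x + 1)) * (w x * \<phi> x))
      + (2 * (x\<^sup>2 - 1) * (poly (pderiv (pderiv \<tau>) * \<tau> - pderiv \<tau> * pderiv \<tau>) x / (poly \<tau> x)^2)
         + 2 * x * (poly (pderiv \<tau>) x / poly \<tau> x)) * \<phi> x = lam * \<phi> x"
    using eq unfolding T_rg_def Let_def eta_def
    by (simp add: DERIV_imp_deriv[OF ddD] DERIV_imp_deriv[OF uD] d1[OF xin])
  have e3: "(x\<^sup>2 - 1) * ((poly (pderiv p * q - p * pderiv q) x / (poly q x)^2 + w x * w x)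
        + ((\<alpha> + 1) / (x - 1) + (\<beta> + 1) / (x + 1)) * w x)
      + (2 * (x\<^sup>2 - 1) * (poly (pderiv (pderiv \<tau>) * \<tau> - pderiv \<tau> * pderiv \<tau>) x / (poly \<tau> x)^2)
         + 2 * x * (poly (pderiv \<tau>) x / poly \<tau> x)) = lam"
  proof -
    have "((x\<^sup>2 - 1) * ((poly (pderiv p * q - p * pderiv q) x / (poly q x)^2 + w x * w x)
        + ((\<alpha> + 1) / (x - 1) + (\<beta> + 1) / (x + 1)) * w x)
      + (2 * (x\<^sup>2 - 1) * (poly (pderiv (pderiv \<tau>) * \<tau> - pderiv \<tau> * pderiv \<tau>) x / (poly \<tau> x)^2)
         + 2 * x * (poly (pderiv \<tau>) x / poly \<tau> x))) * \<phi> x = lam * \<phi> x"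
      using e2 by (simp add: algebra_simps)
    thus ?thesis using phx by simp
  qed
  have xm: "x - 1 \<noteq> 0" "x + 1 \<noteq> 0" using x1 by auto
  show ?thesis
    using alg[OF x(2) tx xm e3[unfolded wdef poly_diff poly_mult]]
    by (simp add: algebra_simps power2_eq_square)
qed


lemma ident_poly:
  fixes \<tau> p q :: "real poly"
  assumes ef: "qr_eigenfunction \<tau> \<alpha> \<beta> \<phi> lam w a b"
    and wdef: "w = (\<lambda>x. poly p x / poly q x)" and nz: "q \<noteq> 0" "\<tau> \<noteq> 0"
  shows "Aop \<alpha> \<beta> p q * (\<tau> * \<tau>) + Bop \<tau> * (q * q) = smult lam (q * q * (\<tau> * \<tau>))"
proof (rule ccontr)
  define E where "E = Aop \<alpha> \<beta> p q * (\<tau> * \<tau>) + Bop \<tau> * (q * q) - smult lam (q * q * (\<tau> * \<tau>))"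
  assume "\<not> ?thesis"
  then have E0: "E \<noteq> 0" unfolding E_def by simp
  have ab: "a < b" using ef unfolding qr_eigenfunction_def by simp
  define Z where "Z = q * \<tau> * [:-1,0,1:]"
  have X0: "[:-1,0,1::real:] \<noteq> 0" by simp
  have Z0: "Z \<noteq> 0" unfolding Z_def mult_eq_0_iff using nz X0 by blast
  have inf: "infinite ({a<..<b} - {x. poly Z x = 0})"
    using ab poly_roots_finite[OF Z0] by (intro Diff_infinite_finite) auto
  have "{a<..<b} - {x. poly Z x = 0} \<subseteq> {x. poly E x = 0}"
  proof
    fix x assume x: "x \<in> {a<..<b} - {x. poly Z x = 0}"
    then have zx: "poly q x \<noteq> 0" "poly \<tau> x \<noteq> 0" "-1 + x * x \<noteq> 0" unfolding Z_def by auto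
    have "x \<noteq> 1" "x \<noteq> -1" using zx(3) by auto
    then have reg: "regular_pt \<tau> x" using zx unfolding regular_pt_def by auto

    have "poly (Aop \<alpha> \<beta> p q * (\<tau> * \<tau>) + Bop \<tau> * (q * q)) x = poly (smult lam (q * q * (\<tau> * \<tau>))) x"
      using pointwise[OF ef wdef reg zx(1)] x by (simp add: Aop_def Bop_def algebra_simps)
    then show "x \<in> {x. poly E x = 0}" unfolding E_def by simp
  qed
  then have "infinite {x. poly E x = 0}" using inf finite_subset by blast
  then show False using poly_roots_finite[OF E0] by simp
qed


theorem mainTheorem7:
  fixes \<tau> :: "real poly" and \<alpha> \<beta> lam a b :: real
    and \<phi> w :: "real \<Rightarrow> real" and i :: nat
  assumes "exceptional_jacobi \<tau> \<alpha> \<beta>"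
    and "qr_eigenfunction \<tau> \<alpha> \<beta> \<phi> lam w a b"
    and "i \<in> {1,2,3,4}"
    and "asym_type w = i"
  shows "lam = jac_lambda i (qr_degree w - mu_degree i \<alpha> \<beta>) \<alpha> \<beta>"
proof -
  have t0: "\<tau> \<noteq> 0" using assms(1) unfolding exceptional_jacobi_def by auto
  obtain p0 q0 where q00: "q0 \<noteq> 0" and w0: "w = (\<lambda>x. poly p0 x / poly q0 x)"
    using assms(2) unfolding qr_eigenfunction_def rational_fun_def by auto
  obtain p q where q0: "q \<noteq> 0" and wd: "w = (\<lambda>x. poly p x / poly q x)" and lt: "degree p < degree q"
  proof (cases "p0 = 0")
    case True
    show ?thesis by (rule that[of "[:0,1:]" 0]) (use w0 True in auto)
  next
    case False
    show ?thesis
      by (rule that[OF q00 w0 ident_big[OF ident_poly[OF assms(2) w0 q00 t0] t0 q00 False]])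
  qed
  define s where "s = coeff p (degree q - 1) / lead_coeff q"
  have lam: "lam = s * (s + \<alpha> + \<beta> + 1)"
    using ident_small[OF ident_poly[OF assms(2) wd q0 t0] t0 q0 lt] s_def by simp
  have dg: "degree (pCons 0 p) \<le> degree q" using lt by (cases "p = 0") auto
  have cf: "coeff (pCons 0 p) (degree q) = coeff p (degree q - 1)"
    using lt by (cases "degree q") auto
  have "((\<lambda>x. poly (pCons 0 p) x / poly q x) \<longlongrightarrow> s) at_top"
    using poly_ratio_tendsto[OF q0 dg] cf s_def by simp
  moreover have "(\<lambda>x. poly (pCons 0 p) x / poly q x) = (\<lambda>x. x * w x)"
    unfolding wd by auto
  ultimately have "((\<lambda>x. x * w x) \<longlongrightarrow> s) at_top" by simp
  then have qd: "qr_degree w = s" unfolding qr_degree_def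
    by (intro tendsto_Lim) simp_all
  show ?thesis using assms(3) unfolding qd lam
    by (auto simp: jac_lambda_def mu_degree_def algebra_simps)
qed
end
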